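(* Let $\pi$ be a probability vector on $[K]$, let $\ell\in[-1,1]^K$ be fixed, and let $A\sim\pi$. Then for every $i\in[K]$, $$\mathbb{E}\left[\left(\ell_i\mathbb{I}(A=i)-\frac{\pi_i\sqrt{\pi_A}\,\ell_A}{\sum_{j=1}^K\pi_j^{3/2}}\right)^2\right]\le 5\,\pi_i(1-\pi_i).$$
   Context: The expectation is over $A\sim\pi$ only. *)

theory Defs
  imports "HOL-Analysis.Analysis"
begin

end

theory Submission
  imports Defs
begin

lemma key_ineq:
  fixes p w T Q S :: real
  assumes w: "w\<^sup>2 = p" "0 \<le> w" "w \<le> 1" and S: "S = p*w + T" "S > 0"
    and T: "0 \<le> T" "T \<le> 1 - p" and Q: "0 \<le> Q" "Q \<le> (1-p)\<^sup>2" "p*Q \<le> S\<^sup>2"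
  shows "p * (T/S)\<^sup>2 + (p/S)\<^sup>2 * Q \<le> 5*p*(1-p)"
proof -
  have p0: "0 \<le> p" "p \<le> 1" using w by (auto simp: power2_eq_square mult_le_one)
  have TS: "T \<le> S" using S p0 w by (simp add: mult_nonneg_nonneg)
  have A: "(T/S)\<^sup>2 \<le> 3*(1-p)"
  proof -
    have x: "0 \<le> T/S" "T/S \<le> 1" using TS T S by auto
    have "(T/S)\<^sup>2 \<le> T/S * 1" unfolding power2_eq_square using x by (intro mult_left_mono) auto
    moreover have "T/S \<le> 3*(1-p)"
    proof (cases "p \<le> 2/3")
      case True
      have "T/S \<le> 1" using TS S by simp
      then show ?thesis using True by simp
    next
      case False
      have "w\<^sup>2 \<ge> (4/5)\<^sup>2" using False w by (simp add: power2_eq_square)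
      hence "w \<ge> 4/5" using w(2) power2_le_imp_le by blast 
      hence "p*w \<ge> (2/3)*(4/5)" using False w by (intro mult_mono) auto
      hence "S \<ge> 1/3" using S T by linarith
      hence "T/S \<le> T/(1/3)" using T by (intro divide_left_mono) auto
      then show ?thesis using T by simp
    qed
    ultimately show ?thesis by linarith
  qed
  have B: "(p/S)\<^sup>2 * Q \<le> 2*p*(1-p)"
  proof (cases "p \<le> 1/2")
    case True
    have "(p/S)\<^sup>2 * Q = p * (p*Q/S\<^sup>2)" by (simp add: power_divide power2_eq_square)
    also have "\<dots> \<le> p * 1" using Q S p0 by (intro mult_left_mono) (auto simp: divide_le_eq_1)
    moreover have "p*1 \<le> p*(2*(1-p))" using True p0 by (intro mult_left_mono) auto
    moreover have "p*(2*(1-p)) = 2*p*(1-p)" by simp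
    ultimately show ?thesis by linarith
  next
    case False
    have "S \<ge> p*w" using S T by linarith
    hence "S\<^sup>2 \<ge> (p*w)\<^sup>2" using p0 w by (intro power_mono) auto
    moreover have "(p*w)\<^sup>2 = p^3" using w(1) by (simp add: power_mult_distrib power3_eq_cube power2_eq_square)
    ultimately have S3: "S\<^sup>2 \<ge> p^3" by simp
    have pp: "p > 0" using False by linarith
    have "(p/S)\<^sup>2 * Q = p^2*Q/S\<^sup>2" by (simp add: power_divide)
    also have "\<dots> \<le> p^2*Q/p^3" using S3 pp Q S(2)
      by (intro divide_left_mono) (auto simp: mult_nonneg_nonneg)
    also have "\<dots> = Q/p" using pp by (simp add: power2_eq_square power3_eq_cube)
    also have "\<dots> \<le> (1-p)\<^sup>2/p" using Q pp by (simp add: divide_right_mono)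
    also have "\<dots> \<le> 2*p*(1-p)"
    proof -
      have "p*(1/2) \<le> p*p" using False by (intro mult_left_mono) auto
      hence "1 - p \<le> 2*p*p" using False by linarith
      hence "(1-p)*(1-p) \<le> (1-p)*(2*p*p)" using p0 by (intro mult_left_mono) auto
      hence "(1-p)\<^sup>2 \<le> 2*p*(1-p)*p" by (simp add: power2_eq_square algebra_simps)
      thus ?thesis using pp by (simp add: divide_le_eq)
    qed
    finally show ?thesis .
  qed
  have "p * (T/S)\<^sup>2 \<le> p * (3*(1-p))" using A p0 by (intro mult_left_mono) auto
  thus ?thesis using B by linarith
qed

theorem mainTheorem8:
  fixes K :: nat and \<pi> l :: "nat \<Rightarrow> real" and i :: nat
  assumes "K \<ge> 1"
    and "\<forall>j\<in>{1..K}. \<pi> j \<ge> 0"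
    and "(\<Sum>j=1..K. \<pi> j) = 1"
    and "\<forall>j\<in>{1..K}. \<bar>l j\<bar> \<le> 1"
    and "i \<in> {1..K}"
  shows "(\<Sum>a=1..K. \<pi> a *
           ((if a = i then l i else 0)
            - \<pi> i * sqrt (\<pi> a) * l a / (\<Sum>j=1..K. \<pi> j powr (3/2)))\<^sup>2)
         \<le> 5 * \<pi> i * (1 - \<pi> i)"
proof -
  define I where "I = {1..K}"
  define R where "R = I - {i}"
  define p where "p = \<pi> i"
  define w where "w = sqrt p"
  define S where "S = (\<Sum>j=1..K. \<pi> j powr (3/2))"
  define T where "T = (\<Sum>a\<in>R. \<pi> a * sqrt (\<pi> a))"
  define Q where "Q = (\<Sum>a\<in>R. (\<pi> a)\<^sup>2)"
  have fin: "finite I" "finite R" unfolding I_def R_def by auto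
  have iI: "i \<in> I" using assms unfolding I_def by auto
  have nn: "\<And>j. j \<in> I \<Longrightarrow> \<pi> j \<ge> 0" using assms unfolding I_def by auto
  have pw: "\<And>j. j \<in> I \<Longrightarrow> \<pi> j powr (3/2) = \<pi> j * sqrt (\<pi> j)"
  proof -
    fix j assume "j \<in> I"
    hence "\<pi> j \<ge> 0" by (rule nn)
    thus "\<pi> j powr (3/2) = \<pi> j * sqrt (\<pi> j)"
    proof (cases "\<pi> j = 0")
      case False
      hence "\<pi> j > 0" using \<open>\<pi> j \<ge> 0\<close> by linarith
      have "\<pi> j * \<pi> j powr (1/2) = \<pi> j powr 1 * \<pi> j powr (1/2)" using \<open>\<pi> j > 0\<close> by simp
      also have "\<dots> = \<pi> j powr (1 + 1/2)" by (rule powr_add[symmetric])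
      finally have "\<pi> j powr (3/2) = \<pi> j * \<pi> j powr (1/2)" by simp
      then show ?thesis by (simp add: powr_half_sqrt \<open>\<pi> j > 0\<close> less_imp_le)
    qed simp
  qed
  have sum1: "(\<Sum>j\<in>I. \<pi> j) = 1" using assms unfolding I_def by simp
  have sumR: "(\<Sum>j\<in>R. \<pi> j) = 1 - p"
    using sum.remove[OF fin(1) iI, of \<pi>] sum1 unfolding R_def p_def by simp
  have S_eq: "S = (\<Sum>j\<in>I. \<pi> j * sqrt (\<pi> j))" unfolding S_def I_def
    using pw unfolding I_def by (intro sum.cong) auto
  have S2: "S = p*w + T"
    using S_eq sum.remove[OF fin(1) iI, of "\<lambda>j. \<pi> j * sqrt (\<pi> j)"]
    unfolding T_def R_def p_def w_def by simp
  have RI: "R \<subseteq> I" unfolding R_def by auto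
  have le1: "\<And>j. j \<in> I \<Longrightarrow> \<pi> j \<le> 1"
  proof -
    fix j assume j: "j \<in> I"
    have "(\<Sum>a\<in>{j}. \<pi> a) \<le> (\<Sum>a\<in>I. \<pi> a)" using j nn fin by (intro sum_mono2) auto
    thus "\<pi> j \<le> 1" using sum1 by simp
  qed
  have sq_le: "\<And>j. j \<in> I \<Longrightarrow> sqrt (\<pi> j) \<le> 1" using le1 by simp
  have T0: "0 \<le> T" unfolding T_def using RI nn by (intro sum_nonneg) auto
  have T1: "T \<le> 1 - p" unfolding sumR[symmetric] T_def
    using RI nn sq_le by (intro sum_mono) (simp add: mult_left_le subsetD)
  have p0: "0 \<le> p" "p \<le> 1" using nn le1 iI unfolding p_def by auto
  have w: "w\<^sup>2 = p" "0 \<le> w" "w \<le> 1" using p0 unfolding w_def by auto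
  have term_le: "\<And>j. j \<in> I \<Longrightarrow> \<pi> j * sqrt (\<pi> j) \<le> S"
  proof -
    fix j assume j: "j \<in> I"
    have "(\<Sum>a\<in>{j}. \<pi> a * sqrt (\<pi> a)) \<le> (\<Sum>a\<in>I. \<pi> a * sqrt (\<pi> a))"
      using j nn fin by (intro sum_mono2) auto
    thus "\<pi> j * sqrt (\<pi> j) \<le> S" using S_eq by simp
  qed
  have Spos: "S > 0"
  proof (rule ccontr)
    assume "\<not> S > 0"
    hence "S \<le> 0" by simp
    have "\<forall>j\<in>I. \<pi> j = 0"
    proof
      fix j assume j: "j \<in> I"
      have "\<pi> j * sqrt (\<pi> j) \<le> 0" using term_le[OF j] \<open>S \<le> 0\<close> by linarith
      moreover have "\<pi> j \<ge> 0" using nn j by auto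
      ultimately show "\<pi> j = 0"
        by (metis mult_pos_pos order.not_eq_order_implies_strict not_le real_sqrt_gt_zero)
    qed
    hence "(\<Sum>j\<in>I. \<pi> j) = 0" by simp
    thus False using sum1 by simp
  qed
  have Q0: "0 \<le> Q" unfolding Q_def by (intro sum_nonneg) auto
  have leR: "\<And>j. j \<in> R \<Longrightarrow> \<pi> j \<le> 1 - p"
  proof -
    fix j assume j: "j \<in> R"
    have "(\<Sum>a\<in>{j}. \<pi> a) \<le> (\<Sum>a\<in>R. \<pi> a)" using j nn fin RI by (intro sum_mono2) auto
    thus "\<pi> j \<le> 1 - p" using sumR by simp
  qed
  have Q1: "Q \<le> (1-p)\<^sup>2"
  proof -
    have "Q \<le> (\<Sum>a\<in>R. \<pi> a * (1-p))" unfolding Q_def power2_eq_square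
      using RI nn leR by (intro sum_mono mult_left_mono) (auto simp: subsetD)
    also have "\<dots> = (1 - p) * (1-p)" using sumR by (simp add: sum_distrib_right[symmetric])
    finally show ?thesis by (simp add: power2_eq_square)
  qed
  have Q2: "p*Q \<le> S\<^sup>2"
  proof -
    have "p*Q = (\<Sum>a\<in>R. p * (\<pi> a)\<^sup>2)" unfolding Q_def by (simp add: sum_distrib_left)
    also have "\<dots> \<le> (\<Sum>a\<in>R. S * (\<pi> a * sqrt (\<pi> a)))"
    proof (intro sum_mono)
      fix a assume a: "a \<in> R"
      hence aI: "a \<in> I" using RI by auto
      have pa: "\<pi> a \<ge> 0" using nn aI by auto
      have "p * sqrt (\<pi> a) \<le> S"
      proof (cases "p \<le> \<pi> a")
        case True
        hence "p * sqrt (\<pi> a) \<le> \<pi> a * sqrt (\<pi> a)" using pa by (intro mult_right_mono) auto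
        thus ?thesis using term_le[OF aI] by linarith
      next
        case False
        hence "p * sqrt (\<pi> a) \<le> p * sqrt p" using p0 by (intro mult_left_mono) auto
        thus ?thesis using term_le[OF iI] unfolding p_def by linarith
      qed
      have "p * (\<pi> a)\<^sup>2 = (\<pi> a * sqrt (\<pi> a)) * (p * sqrt (\<pi> a))"
        using pa by (simp add: power2_eq_square algebra_simps)
      also have "\<dots> \<le> (\<pi> a * sqrt (\<pi> a)) * S"
        using pa \<open>p * sqrt (\<pi> a) \<le> S\<close> by (intro mult_left_mono) auto
      also have "\<dots> = S * (\<pi> a * sqrt (\<pi> a))" by (rule mult.commute)
      finally show "p * (\<pi> a)\<^sup>2 \<le> S * (\<pi> a * sqrt (\<pi> a))" .
    qed
    also have "\<dots> = S * T" unfolding T_def by (simp add: sum_distrib_left)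
    also have "\<dots> \<le> S * S" using Spos S2 p0 w T0 by (intro mult_left_mono) auto
    finally show ?thesis by (simp add: power2_eq_square)
  qed
  have K: "p * (T/S)\<^sup>2 + (p/S)\<^sup>2 * Q \<le> 5*p*(1-p)"
    by (rule key_ineq[OF w S2 Spos T0 T1 Q0 Q1 Q2])
  define f where "f = (\<lambda>a. \<pi> a * ((if a = i then l i else 0)
            - \<pi> i * sqrt (\<pi> a) * l a / S)\<^sup>2)"
  have "(\<Sum>a\<in>I. f a) = f i + (\<Sum>a\<in>R. f a)"
    using sum.remove[OF fin(1) iI, of f] unfolding R_def by simp
  also have "f i \<le> p * (T/S)\<^sup>2"
  proof -
    have e: "l i - p*w*l i/S = l i * (T/S)" using S2 Spos by (simp add: field_simps)
    have "f i = p * (l i - p*w*l i/S)\<^sup>2" unfolding f_def p_def w_def by simp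
    also have "\<dots> = p*(l i * (T/S))\<^sup>2" by (simp only: e)
    also have "\<dots> = p * (l i)\<^sup>2 * (T/S)\<^sup>2" by (simp add: power_mult_distrib power_divide)
    also have "\<dots> \<le> p * 1 * (T/S)\<^sup>2"
      using assms(4) iI p0 unfolding I_def by (intro mult_right_mono mult_left_mono) (auto simp: abs_square_le_1)
    finally show ?thesis by simp
  qed
  also have "(\<Sum>a\<in>R. f a) \<le> (\<Sum>a\<in>R. (p/S)\<^sup>2 * (\<pi> a)\<^sup>2)"
  proof (intro sum_mono)
    fix a assume a: "a \<in> R"
    hence aI: "a \<in> I" and ai: "a \<noteq> i" using RI R_def by auto
    have pa: "\<pi> a \<ge> 0" using nn aI by auto
    have "f a = \<pi> a * (p * sqrt (\<pi> a) * l a / S)\<^sup>2" unfolding f_def p_def[symmetric] using ai by simp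
    also have "\<dots> = (p/S)\<^sup>2 * (\<pi> a * (sqrt (\<pi> a))\<^sup>2) * (l a)\<^sup>2"
      by (simp add: power_mult_distrib power_divide mult_ac)
    also have "\<dots> = (p/S)\<^sup>2 * (\<pi> a)\<^sup>2 * (l a)\<^sup>2" using pa by (simp add: power2_eq_square)
    also have "\<dots> \<le> (p/S)\<^sup>2 * (\<pi> a)\<^sup>2 * 1"
      using assms(4) aI unfolding I_def by (intro mult_left_mono) (auto simp: abs_square_le_1)
    finally show "f a \<le> (p/S)\<^sup>2 * (\<pi> a)\<^sup>2" by simp
  qed
  also have "(\<Sum>a\<in>R. (p/S)\<^sup>2 * (\<pi> a)\<^sup>2) = (p/S)\<^sup>2 * Q" unfolding Q_def by (simp add: sum_distrib_left)
  finally have "(\<Sum>a\<in>I. f a) \<le> 5*p*(1-p)" using K by linarith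
  thus ?thesis unfolding f_def I_def S_def p_def by simp
qed

end
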